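(* Let $r\ge1$, $\mathbb{K}=\mathbb{F}_{2^r}$, and let $\mathcal{L}\subseteq\mathbb{F}_2^{N\times N}$ be a linear subspace. If $A\in\mathcal{L}\otimes_{\mathbb{F}_2}\mathbb{K}$ is nonzero and $\operatorname{rank}_{\mathbb{K}}(A)\le k$, then there exists a nonzero $B\in\mathcal{L}$ with $\operatorname{rank}_{\mathbb{F}_2}(B)\le rk$.
   Context: $\mathcal{L}\otimes_{\mathbb{F}_2}\mathbb{K}$ is identified with the $\mathbb{K}$-linear span of $\mathcal{L}$ inside $\mathbb{K}^{N\times N}$ (equivalently, the set of solutions over $\mathbb{K}$ of the homogeneous $\mathbb{F}_2$-linear equations defining $\mathcal{L}$). *)

theory Defs
  imports "HOL-Library.Z2" "Jordan_Normal_Form.DL_Rank"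
begin

definition emb2 :: "bit \<Rightarrow> 'k::field" where
  "emb2 b = (if b = 0 then 0 else 1)"

definition f2_subspace :: "nat \<Rightarrow> bit mat set \<Rightarrow> bool" where
  "f2_subspace N L \<longleftrightarrow> L \<subseteq> carrier_mat N N \<and> 0\<^sub>m N N \<in> L \<and>
     (\<forall>B\<in>L. \<forall>C\<in>L. B + C \<in> L) \<and> (\<forall>c. \<forall>B\<in>L. c \<cdot>\<^sub>m B \<in> L)"

text \<open>The K-linear span of L inside K^(N x N), i.e. L tensor_F2 K.\<close>
definition ext_span :: "nat \<Rightarrow> bit mat set \<Rightarrow> 'k::field mat set" where
  "ext_span N L = {A. A \<in> carrier_mat N N \<and>
     (\<exists>S c. finite S \<and> S \<subseteq> L \<and>
        (\<forall>i<N. \<forall>j<N. A $$ (i,j) = (\<Sum>B\<in>S. c B * emb2 (B $$ (i,j)))))}"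

end

theory Submission
  imports Defs "HOL-Number_Theory.Residues"
begin


lemma char2:
  assumes "r \<ge> 1" and "card (UNIV :: 'k::{field,finite} set) = 2 ^ r"
  shows "(1::'k) + 1 = 0"
proof -
  have "CHAR('k) dvd 2 ^ r" using CHAR_dvd_CARD[where 'a='k] assms by simp
  then obtain j where j: "j \<le> r" "CHAR('k) = 2 ^ j"
    using divides_primepow_nat[of 2 "CHAR('k)" r] by auto
  have "CHAR('k) \<noteq> 1" by simp
  then have "j \<noteq> 0" using j by auto
  have "(of_nat (2 ^ j) :: 'k) = 0" using j(2) by (metis of_nat_CHAR)
  then have "(of_nat 2 :: 'k) ^ j = 0" by simp
  then have "(of_nat 2 :: 'k) = 0" by simp
  then show ?thesis by simp
qed

definition sc2 :: "bit \<Rightarrow> 'k::field \<Rightarrow> 'k" where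
  "sc2 b x = emb2 b * x"

lemma emb2_simps [simp]: "emb2 0 = 0" "emb2 1 = 1"
  by (auto simp: emb2_def)

lemma vs_sc2:
  assumes "(1::'k::field) + 1 = 0"
  shows "vector_space (sc2 :: bit \<Rightarrow> 'k \<Rightarrow> 'k)"
proof (unfold_locales)
  fix a b :: bit and x y :: 'k
  show "sc2 a (x + y) = sc2 a x + sc2 a y" by (simp add: sc2_def algebra_simps)
  show "sc2 (a + b) x = sc2 a x + sc2 b x"
    using assms by (cases "a = 0"; cases "b = 0") (auto simp: sc2_def algebra_simps)
  show "sc2 a (sc2 b x) = sc2 (a * b) x"
    by (cases "a = 0"; cases "b = 0") (auto simp: sc2_def)
  show "sc2 1 x = x" by (simp add: sc2_def)
qed

lemma field_basis:
  assumes "r \<ge> 1" and "card (UNIV :: 'k set) = 2 ^ r"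
  obtains E :: "'k::{field,finite} set" and co :: "'k \<Rightarrow> 'k \<Rightarrow> bit"
  where "finite E" "card E \<le> r" "\<And>e x y. co e (x + y) = co e x + co e y"
    "\<And>x. (\<Sum>e\<in>E. emb2 (co e x) * e) = x"
proof -
  interpret v: vector_space "sc2 :: bit \<Rightarrow> 'k \<Rightarrow> 'k"
    using vs_sc2 char2[OF assms] by blast
  obtain B where B: "v.independent B" "UNIV \<subseteq> v.span B"
    using v.basis_exists[of UNIV] by blast
  have finB: "finite B" by simp
  define co where "co e x = v.representation B x e" for e x
  have add: "co e (x + y) = co e x + co e y" for e x y
  proof -
    have "v.representation B (x+y) = (\<lambda>b. v.representation B x b + v.representation B y b)"
      by (rule v.representation_add[OF B(1)]) (use B(2) in auto)
    then show ?thesis unfolding co_def by (rule fun_cong)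
  qed
  have rep: "(\<Sum>e\<in>B. emb2 (co e x) * e) = x" for x
    using v.sum_representation_eq[OF B(1), of x B] B(2) finB
    unfolding co_def sc2_def by auto
  have repX: "v.representation B (\<Sum>X) = (\<lambda>b. if b \<in> X then 1 else 0)" if "X \<subseteq> B" for X
  proof (rule v.representation_eqI[OF B(1)])
    show "\<Sum>X \<in> v.span B" using B(2) by auto
    show "(if b \<in> X then 1::bit else 0) \<noteq> 0 \<Longrightarrow> b \<in> B" for b using that by (cases "b \<in> X") auto
    show "finite {b. (if b \<in> X then 1::bit else 0) \<noteq> 0}" by simp
    have "{b. (if b \<in> X then 1::bit else 0) \<noteq> 0} = X" by auto
    then show "(\<Sum>b | (if b \<in> X then 1::bit else 0) \<noteq> 0. sc2 (if b \<in> X then 1 else 0) b) = \<Sum>X"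
      by (simp add: sc2_def)
  qed
  have inj: "inj_on (\<lambda>X. \<Sum>X) (Pow B)"
  proof (rule inj_onI)
    fix X Y assume XY: "X \<in> Pow B" "Y \<in> Pow B" "\<Sum>X = (\<Sum>Y :: 'k)"
    then have h: "(\<lambda>b. if b \<in> X then 1::bit else 0) = (\<lambda>b. if b \<in> Y then 1 else 0)"
      using repX[of X] repX[of Y] by auto
    have "b \<in> X \<longleftrightarrow> b \<in> Y" for b
      using fun_cong[OF h, of b] by (auto split: if_splits)
    then show "X = Y" by blast
  qed
  have "card (Pow B) \<le> card (UNIV :: 'k set)"
    using card_inj_on_le[OF inj] by simp
  then have "(2::nat) ^ card B \<le> 2 ^ r" using assms(2) finB by (simp add: card_Pow)
  then have "card B \<le> r" by simp
  then show ?thesis using that[OF finB _ add rep] by blast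
qed



declare add_bit_eq_xor[simp del] mult_bit_eq_and[simp del] sum_of_bool_eq[simp del]

lemma rank_sum_rank1:
  fixes f g :: "'i \<Rightarrow> nat \<Rightarrow> 'a::field"
  assumes "finite I"
  shows "vec_space.rank n (mat n n (\<lambda>(i,j). \<Sum>t\<in>I. f t i * g t j)) \<le> card I"
  using assms
proof (induction I rule: finite_induct)
  case empty
  have "mat n n (\<lambda>_. 0::'a) = 0\<^sub>m n n"
    by (rule eq_matI) auto
  then show ?case by (simp add: vec_space.rank_0I)
next
  case (insert t I)
  let ?M1 = "mat n n (\<lambda>(i,j). f t i * g t j)"
  let ?M2 = "mat n n (\<lambda>(i,j). \<Sum>s\<in>I. f s i * g s j)"
  have eq: "mat n n (\<lambda>(i,j). \<Sum>s\<in>insert t I. f s i * g s j) = ?M1 + ?M2"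
    by (rule eq_matI) (auto simp: insert)
  have r1: "vec_space.rank n ?M1 \<le> 1"
    by (rule vec_space.rank_le_1_product_entries[of ?M1 n n "\<lambda>i. f t i" "\<lambda>j. g t j"]) auto
  have "vec_space.rank n (?M1 + ?M2) \<le> vec_space.rank n ?M1 + vec_space.rank n ?M2"
    by (rule vec_space.rank_subadditive) auto
  then show ?case using r1 insert eq by simp
qed

lemma rank_decomp:
  fixes A :: "'a::field mat"
  assumes A: "A \<in> carrier_mat n nc"
  shows "\<exists>T a. finite T \<and> card T = vec_space.rank n A \<and>
     (\<forall>i<n. \<forall>j<nc. A $$ (i,j) = (\<Sum>w\<in>T. a j w * w $ i))"
proof -
  interpret vec_space "TYPE('a)" n .
  obtain S where S: "maximal S (\<lambda>T. T \<subseteq> set (cols A) \<and> lin_indpt T)"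
    using maximal_exists[of "(\<lambda>T. T \<subseteq> set (cols A) \<and> lin_indpt T)" "card (set (cols A))" "{}"]
    by (meson List.finite_set card_mono empty_iff empty_subsetI finite_lin_indpt2 rev_finite_subset)
  have Ssub: "S \<subseteq> set (cols A)" "lin_indpt S" using S unfolding maximal_def by auto
  have finS: "finite S" using Ssub(1) finite_subset by blast
  have card: "rank A = card S" by (rule rank_card_indpt[OF A S])
  have colsC: "set (cols A) \<subseteq> carrier_vec n" using cols_dim A carrier_matD(1) by blast
  have SC: "S \<subseteq> carrier_vec n" using Ssub colsC by blast
  have sp: "set (cols A) \<subseteq> span S"
  proof (rule ccontr)
    assume "\<not> set (cols A) \<subseteq> span S"
    then obtain s where s: "s \<in> set (cols A)" "s \<notin> span S" by blast
    then have li: "lin_indpt (S \<union> {s})" using lindep_span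
      by (meson Ssub colsC lin_dep_iff_in_span rev_subsetD span_mem subset_trans)
    have "s \<notin> S" using s SC span_mem by auto
    then have "(S \<union> {s}) \<subseteq> set (cols A) \<and> lin_indpt (S \<union> {s})" using Ssub li s by auto
    then have "\<not> maximal S (\<lambda>T. T \<subseteq> set (cols A) \<and> lin_indpt T)"
      unfolding maximal_def using \<open>s \<notin> S\<close> by auto
    then show False using S by blast
  qed
  have "\<forall>j<nc. \<exists>a. lincomb a S = col A j"
  proof (intro allI impI)
    fix j assume "j < nc"
    then have "col A j \<in> set (cols A)" using A by (simp add: cols_def)
    then have "col A j \<in> span S" using sp by blast
    then show "\<exists>a. lincomb a S = col A j" using finite_in_span[OF finS _] SC by auto
  qed
  then obtain a where a: "\<forall>j<nc. lincomb (a j) S = col A j" by metis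
  have "A $$ (i,j) = (\<Sum>w\<in>S. a j w * w $ i)" if "i < n" "j < nc" for i j
  proof -
    have "A $$ (i,j) = col A j $ i" using A that by simp
    also have "\<dots> = lincomb (a j) S $ i" using a that by simp
    also have "\<dots> = (\<Sum>w\<in>S. a j w * w $ i)" by (rule lincomb_index[OF that(1) SC])
    finally show ?thesis .
  qed
  then show ?thesis using finS card by auto
qed


lemma add_sum:
  fixes \<phi> :: "'a::comm_monoid_add \<Rightarrow> bit"
  assumes add: "\<And>x y. \<phi> (x + y) = \<phi> x + \<phi> y"
  shows "\<phi> (sum h I) = (\<Sum>t\<in>I. \<phi> (h t))"
proof -
  have z: "\<phi> 0 = 0"
  proof -
    have "\<phi> 0 = \<phi> 0 + \<phi> 0" using add[of 0 0] by simp
    then show ?thesis by (cases "\<phi> 0 = 0") auto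
  qed
  show ?thesis
    by (induction I rule: infinite_finite_induct) (auto simp: z add)
qed

lemma span_closed:
  assumes "f2_subspace N L" "finite S" "S \<subseteq> L"
  shows "mat N N (\<lambda>(i,j). \<Sum>C\<in>S. d C * C $$ (i,j)) \<in> L"
  using assms(2,3)
proof (induction S rule: finite_induct)
  case empty
  have "mat N N (\<lambda>_. 0::bit) = 0\<^sub>m N N" by (rule eq_matI) auto
  then show ?case using assms(1) unfolding f2_subspace_def by simp
next
  case (insert C S)
  have CL: "C \<in> L" and SL: "S \<subseteq> L" using insert by auto
  have Cc: "C \<in> carrier_mat N N" using CL assms(1) unfolding f2_subspace_def by auto
  have IH: "mat N N (\<lambda>(i,j). \<Sum>C\<in>S. d C * C $$ (i,j)) \<in> L" using insert SL by blast
  have sm: "d C \<cdot>\<^sub>m C \<in> L" using CL assms(1) unfolding f2_subspace_def by auto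
  have eq: "mat N N (\<lambda>(i,j). \<Sum>C\<in>insert C S. d C * C $$ (i,j)) =
      d C \<cdot>\<^sub>m C + mat N N (\<lambda>(i,j). \<Sum>C\<in>S. d C * C $$ (i,j))"
  proof (rule eq_matI)
    fix i j assume "i < dim_row (d C \<cdot>\<^sub>m C + mat N N (\<lambda>(i,j). \<Sum>C\<in>S. d C * C $$ (i,j)))"
      "j < dim_col (d C \<cdot>\<^sub>m C + mat N N (\<lambda>(i,j). \<Sum>C\<in>S. d C * C $$ (i,j)))"
    then have ij: "i < N" "j < N" using Cc by auto
    have "(\<Sum>C'\<in>insert C S. d C' * C' $$ (i,j)) = d C * C $$ (i,j) + (\<Sum>C'\<in>S. d C' * C' $$ (i,j))"
      by (rule sum.insert) (use insert in auto)
    then show "mat N N (\<lambda>(i,j). \<Sum>C\<in>insert C S. d C * C $$ (i,j)) $$ (i,j) =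
      (d C \<cdot>\<^sub>m C + mat N N (\<lambda>(i,j). \<Sum>C\<in>S. d C * C $$ (i,j))) $$ (i,j)"
      using ij Cc by simp
  qed (use Cc in auto)
  show ?case unfolding eq using sm IH assms(1) unfolding f2_subspace_def by blast
qed

theorem lemma3p12:
  fixes L :: "bit mat set" and A :: "'k::{field,finite} mat"
    and N k r :: nat
  assumes "r \<ge> 1"
    and "card (UNIV :: 'k set) = 2 ^ r"
    and "f2_subspace N L"
    and "A \<in> ext_span N L"
    and "A \<noteq> 0\<^sub>m N N"
    and "vec_space.rank N A \<le> k"
  shows "\<exists>B\<in>L. B \<noteq> 0\<^sub>m N N \<and> vec_space.rank N B \<le> r * k"
proof -
  have h: "A \<in> carrier_mat N N \<and> (\<exists>S c. finite S \<and> S \<subseteq> L \<and>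
      (\<forall>i<N. \<forall>j<N. A $$ (i,j) = (\<Sum>C\<in>S. c C * emb2 (C $$ (i,j)))))"
    using assms(4) unfolding ext_span_def by (rule CollectD)
  then have A1: "A \<in> carrier_mat N N" by (rule conjunct1)
  from h obtain S c where A23: "finite S" "S \<subseteq> L"
    and Aij': "\<forall>i<N. \<forall>j<N. A $$ (i,j) = (\<Sum>C\<in>S. c C * emb2 (C $$ (i,j)))"
    by (elim conjE exE)
  note A = A1 A23
  have Aij: "A $$ (i,j) = (\<Sum>C\<in>S. c C * emb2 (C $$ (i,j)))" if "i < N" "j < N" for i j
    using Aij' that by simp
  have "\<exists>E (co :: 'k \<Rightarrow> 'k \<Rightarrow> bit). finite E \<and> card E \<le> r \<and> (\<forall>e x y. co e (x + y) = co e x + co e y)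
     \<and> (\<forall>x. (\<Sum>e\<in>E. emb2 (co e x) * e) = x)"
    by (rule field_basis[OF assms(1,2)]) (intro exI conjI allI; assumption)
  then obtain E and co :: "'k \<Rightarrow> 'k \<Rightarrow> bit" where E: "finite E" "card E \<le> r"
    and add': "\<forall>e x y. co e (x + y) = co e x + co e y"
    and rep': "\<forall>x. (\<Sum>e\<in>E. emb2 (co e x) * e) = x"
    by (elim conjE exE)
  have add: "co e (x + y) = co e x + co e y" for e x y using add' by simp
  have rep: "(\<Sum>e\<in>E. emb2 (co e x) * e) = x" for x using rep' by (rule spec)
  obtain i0 j0 where ij0: "i0 < N" "j0 < N" "A $$ (i0,j0) \<noteq> 0"
  proof -
    have "\<exists>i<N. \<exists>j<N. A $$ (i,j) \<noteq> 0"
    proof (rule ccontr)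
      assume "\<not> ?thesis"
      then have "A = 0\<^sub>m N N" using A(1) by (intro eq_matI) auto
      then show False using assms(5) by blast
    qed
    then show ?thesis using that by blast
  qed
  define a where "a = A $$ (i0,j0)"
  have "\<exists>e\<in>E. co e a \<noteq> 0"
  proof (rule ccontr)
    assume "\<not> ?thesis"
    then have "(\<Sum>e\<in>E. emb2 (co e a) * e) = 0" by simp
    then show False using rep[of a] ij0 a_def by simp
  qed
  then obtain e0 where e0: "e0 \<in> E" "co e0 a = 1" by auto
  define \<phi> where "\<phi> = co e0"
  have \<phi>add: "\<phi> (x + y) = \<phi> x + \<phi> y" for x y unfolding \<phi>_def by (rule add)
  have \<phi>emb: "\<phi> (emb2 b * y) = b * \<phi> y" for b y
  proof (cases "b = 0")
    case True
    have "\<phi> 0 = 0" using add_sum[of \<phi> id "{}", OF \<phi>add] by simp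
    then show ?thesis using True by simp
  next
    case False
    then have "b = 1" by simp
    then show ?thesis by simp
  qed
  have \<phi>emb': "\<phi> (y * emb2 b) = \<phi> y * b" for b y
    by (metis \<phi>emb mult.commute)
  define B where "B = mat N N (\<lambda>(i,j). \<phi> (A $$ (i,j)))"
  have BL: "B \<in> L"
  proof -
    have "B = mat N N (\<lambda>(i,j). \<Sum>C\<in>S. \<phi> (c C) * C $$ (i,j))"
    proof (rule eq_matI)
      fix i j assume ij: "i < dim_row (mat N N (\<lambda>(i,j). \<Sum>C\<in>S. \<phi> (c C) * C $$ (i,j)))"
        "j < dim_col (mat N N (\<lambda>(i,j). \<Sum>C\<in>S. \<phi> (c C) * C $$ (i,j)))"
      then have ij': "i < N" "j < N" by auto
      have "B $$ (i,j) = \<phi> (\<Sum>C\<in>S. c C * emb2 (C $$ (i,j)))"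
        using ij' by (simp add: B_def Aij)
      also have "\<dots> = (\<Sum>C\<in>S. \<phi> (c C * emb2 (C $$ (i,j))))"
        by (rule add_sum[OF \<phi>add])
      also have "\<dots> = (\<Sum>C\<in>S. \<phi> (c C) * C $$ (i,j))"
        by (rule sum.cong) (simp_all add: \<phi>emb')
      finally show "B $$ (i,j) = mat N N (\<lambda>(i,j). \<Sum>C\<in>S. \<phi> (c C) * C $$ (i,j)) $$ (i,j)"
        using ij' by simp
    qed (auto simp: B_def)
    then show ?thesis using span_closed[OF assms(3) A(2,3)] by simp
  qed
  have B0: "B \<noteq> 0\<^sub>m N N"
  proof
    assume "B = 0\<^sub>m N N"
    then have "B $$ (i0,j0) = 0" using ij0 by simp
    moreover have "B $$ (i0,j0) = 1" using ij0 e0 by (simp add: B_def a_def \<phi>_def)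
    ultimately show False by simp
  qed
  obtain T aa where T: "finite T" "card T = vec_space.rank N A"
    and Adec: "\<forall>i<N. \<forall>j<N. A $$ (i,j) = (\<Sum>w\<in>T. aa j w * w $ i)"
    using rank_decomp[OF A(1)] by blast
  have Beq: "B = mat N N (\<lambda>(i,j). \<Sum>t\<in>T \<times> E. co (snd t) (fst t $ i) * \<phi> (snd t * aa j (fst t)))"
  proof (rule eq_matI)
    fix i j assume ij: "i < dim_row (mat N N (\<lambda>(i,j). \<Sum>t\<in>T \<times> E. co (snd t) (fst t $ i) * \<phi> (snd t * aa j (fst t))))"
      "j < dim_col (mat N N (\<lambda>(i,j). \<Sum>t\<in>T \<times> E. co (snd t) (fst t $ i) * \<phi> (snd t * aa j (fst t))))"
    then have ij': "i < N" "j < N" by auto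
    have inner: "\<phi> (aa j w * w $ i) = (\<Sum>e\<in>E. co e (w $ i) * \<phi> (e * aa j w))" for w
    proof -
      have "aa j w * w $ i = (\<Sum>e\<in>E. emb2 (co e (w $ i)) * e) * aa j w"
        unfolding rep by (rule mult.commute)
      also have "\<dots> = (\<Sum>e\<in>E. emb2 (co e (w $ i)) * (e * aa j w))"
        by (simp add: sum_distrib_right mult.assoc)
      finally show ?thesis by (simp add: add_sum[OF \<phi>add] \<phi>emb)
    qed
    have "B $$ (i,j) = \<phi> (\<Sum>w\<in>T. aa j w * w $ i)" using ij' Adec by (simp add: B_def)
    also have "\<dots> = (\<Sum>w\<in>T. \<Sum>e\<in>E. co e (w $ i) * \<phi> (e * aa j w))"
      by (simp add: add_sum[OF \<phi>add] inner)
    also have "\<dots> = (\<Sum>t\<in>T \<times> E. co (snd t) (fst t $ i) * \<phi> (snd t * aa j (fst t)))"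
      unfolding sum.cartesian_product by (rule sum.cong) (auto simp: case_prod_beta)
    finally show "B $$ (i,j) = mat N N (\<lambda>(i,j). \<Sum>t\<in>T \<times> E. co (snd t) (fst t $ i) * \<phi> (snd t * aa j (fst t))) $$ (i,j)"
      using ij' by simp
  qed (auto simp: B_def)
  have "vec_space.rank N B \<le> card (T \<times> E)"
    unfolding Beq
    by (rule rank_sum_rank1[where I="T \<times> E" and f="\<lambda>t i. co (snd t) (fst t $ i)"
        and g="\<lambda>t j. \<phi> (snd t * aa j (fst t))" and n=N]) (use T E in auto)
  also have "\<dots> = card T * card E" by (simp add: card_cartesian_product)
  also have "\<dots> \<le> k * r" using T(2) assms(6) E(2) by (simp add: mult_le_mono)
  finally have "vec_space.rank N B \<le> r * k" by (simp add: mult.commute)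
  then show ?thesis using BL B0 by blast
qed

end
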